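(* Let $\succcurlyeq$ be a preference relation on the set $\mathcal{B}$ of bets over a propositional language $\mathcal{L}$. The following are equivalent: (1) $\succcurlyeq$ satisfies Non-Triviality and Objective Expected Utility; (2) $\succcurlyeq$ is represented by a subjective model of uncertainty $(\Omega,t,\lambda)$ with $\lambda$ additive.
   Context: Let $\mathbb{P}$ be a set of propositional variables containing two distinguished propositions $\mathbf{T}$ ("true") and $\mathbf{F}$ ("false"), and let $\mathcal{L}=\mathcal{L}(\mathbb{P})$ be the language generated from $\mathbb{P}$ by $\neg,\land,\lor$. A bet is a function $b:\mathcal{L}\to[0,1]$ with finite support $\mathrm{supp}(b)=\{\phi: b(\phi)>0\}$ and $\sum_{\phi\in\mathrm{supp}(b)} b(\phi)=1$; the primitive bet $b_\phi$ assigns $1$ to $\phi$ and $0$ elsewhere. The set $\mathcal{B}$ of bets is a mixture space under pointwise mixtures. $\succcurlyeq$ is a binary relation on $\mathcal{B}$ with symmetric part $\sim$ and asymmetric part $\succ$. For a set $\Omega$, a truth valuation is a map $t:\mathcal{L}\to 2^\Omega$ with $t(\mathbf{T})=\Omega$, $t(\mathbf{F})=\emptyset$. For a field of sets $\Sigma\subseteq 2^\Omega$, a likelihood appraisal is a map $\lambda:\Sigma\to[0,1]$ with $\lambda(\emptyset)=0$, $\lambda(\Omega)=1$; it is additive if $\lambda(A\cup B)=\lambda(A)+\lambda(B)$ whenever $A,B\in\Sigma$ are disjoint. A subjective model of uncertainty is a triple $(\Omega,t,\lambda)$ with $t$ a truth valuation and $\lambda$ a likelihood appraisal on a field $\Sigma\supseteq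 t(\mathcal{L})$. It represents $\succcurlyeq$ if for all $b,b'\in\mathcal{B}$: $b\succcurlyeq b'$ iff $\sum_{\phi\in\mathrm{supp}(b)} b(\phi)\lambda(t(\phi))\ge \sum_{\phi\in\mathrm{supp}(b')} b'(\phi)\lambda(t(\phi))$. Non-Triviality: $b_{\mathbf{T}}\succcurlyeq b_\phi\succcurlyeq b_{\mathbf{F}}$ for all $\phi\in\mathcal{L}$, and $b_{\mathbf{T}}\succ b_{\mathbf{F}}$. Objective Expected Utility: $\succcurlyeq$ is complete and transitive and satisfies the Archimedean (continuity) axiom and the Independence axiom with respect to mixtures in $\mathcal{B}$. *)

theory Defs
  imports "HOL-Analysis.Analysis"
begin

datatype 'p form = Prop 'p | Neg "'p form" | Conj "'p form" "'p form" | Disj "'p form" "'p form"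

type_synonym 'p bet = "'p form \<Rightarrow> real"

definition supp :: "'p bet \<Rightarrow> 'p form set" where
  "supp b = {\<phi>. b \<phi> > 0}"

definition is_bet :: "'p bet \<Rightarrow> bool" where
  "is_bet b \<longleftrightarrow> (\<forall>\<phi>. 0 \<le> b \<phi> \<and> b \<phi> \<le> 1) \<and> finite (supp b) \<and> (\<Sum>\<phi>\<in>supp b. b \<phi>) = 1"

definition bets :: "'p bet set" where
  "bets = {b. is_bet b}"

definition prim :: "'p form \<Rightarrow> 'p bet" where
  "prim \<phi> = (\<lambda>\<psi>. if \<psi> = \<phi> then 1 else 0)"

definition mix :: "real \<Rightarrow> 'p bet \<Rightarrow> 'p bet \<Rightarrow> 'p bet" where
  "mix \<alpha> b b' = (\<lambda>\<phi>. \<alpha> * b \<phi> + (1 - \<alpha>) * b' \<phi>)"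

definition strict :: "('p bet \<Rightarrow> 'p bet \<Rightarrow> bool) \<Rightarrow> 'p bet \<Rightarrow> 'p bet \<Rightarrow> bool" where
  "strict R b b' \<longleftrightarrow> R b b' \<and> \<not> R b' b"

text \<open>Non-Triviality; tT and tF are the distinguished propositional variables T and F.\<close>
definition non_triviality :: "'p \<Rightarrow> 'p \<Rightarrow> ('p bet \<Rightarrow> 'p bet \<Rightarrow> bool) \<Rightarrow> bool" where
  "non_triviality tT tF R \<longleftrightarrow>
     (\<forall>\<phi>. R (prim (Prop tT)) (prim \<phi>) \<and> R (prim \<phi>) (prim (Prop tF)))
     \<and> strict R (prim (Prop tT)) (prim (Prop tF))"

definition complete_on_bets :: "('p bet \<Rightarrow> 'p bet \<Rightarrow> bool) \<Rightarrow> bool" where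
  "complete_on_bets R \<longleftrightarrow> (\<forall>b\<in>bets. \<forall>b'\<in>bets. R b b' \<or> R b' b)"

definition transitive_on_bets :: "('p bet \<Rightarrow> 'p bet \<Rightarrow> bool) \<Rightarrow> bool" where
  "transitive_on_bets R \<longleftrightarrow>
     (\<forall>b\<in>bets. \<forall>b'\<in>bets. \<forall>b''\<in>bets. R b b' \<and> R b' b'' \<longrightarrow> R b b'')"

definition archimedean :: "('p bet \<Rightarrow> 'p bet \<Rightarrow> bool) \<Rightarrow> bool" where
  "archimedean R \<longleftrightarrow>
     (\<forall>b\<in>bets. \<forall>b'\<in>bets. \<forall>b''\<in>bets. strict R b b' \<and> strict R b' b'' \<longrightarrow>
        (\<exists>\<alpha>\<in>{0<..<1}. \<exists>\<beta>\<in>{0<..<1}.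
            strict R (mix \<alpha> b b'') b' \<and> strict R b' (mix \<beta> b b'')))"

definition independence :: "('p bet \<Rightarrow> 'p bet \<Rightarrow> bool) \<Rightarrow> bool" where
  "independence R \<longleftrightarrow>
     (\<forall>b\<in>bets. \<forall>b'\<in>bets. \<forall>b''\<in>bets. \<forall>\<alpha>\<in>{0<..1}.
        strict R b b' \<longrightarrow> strict R (mix \<alpha> b b'') (mix \<alpha> b' b''))"

definition objective_EU :: "('p bet \<Rightarrow> 'p bet \<Rightarrow> bool) \<Rightarrow> bool" where
  "objective_EU R \<longleftrightarrow> complete_on_bets R \<and> transitive_on_bets R \<and> archimedean R \<and> independence R"

definition truth_valuation :: "'p \<Rightarrow> 'p \<Rightarrow> 'w set \<Rightarrow> ('p form \<Rightarrow> 'w set) \<Rightarrow> bool" where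
  "truth_valuation tT tF \<Omega> t \<longleftrightarrow>
     (\<forall>\<phi>. t \<phi> \<subseteq> \<Omega>) \<and> t (Prop tT) = \<Omega> \<and> t (Prop tF) = {}"

definition likelihood_appraisal :: "'w set \<Rightarrow> 'w set set \<Rightarrow> ('w set \<Rightarrow> real) \<Rightarrow> bool" where
  "likelihood_appraisal \<Omega> \<Sigma> lk \<longleftrightarrow>
     (\<forall>A\<in>\<Sigma>. 0 \<le> lk A \<and> lk A \<le> 1) \<and> lk {} = 0 \<and> lk \<Omega> = 1"

definition additive_on :: "'w set set \<Rightarrow> ('w set \<Rightarrow> real) \<Rightarrow> bool" where
  "additive_on \<Sigma> lk \<longleftrightarrow>
     (\<forall>A\<in>\<Sigma>. \<forall>B\<in>\<Sigma>. A \<inter> B = {} \<longrightarrow> lk (A \<union> B) = lk A + lk B)"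

definition subjective_model ::
  "'p \<Rightarrow> 'p \<Rightarrow> 'w set \<Rightarrow> ('p form \<Rightarrow> 'w set) \<Rightarrow> 'w set set \<Rightarrow> ('w set \<Rightarrow> real) \<Rightarrow> bool" where
  "subjective_model tT tF \<Omega> t \<Sigma> lk \<longleftrightarrow>
     truth_valuation tT tF \<Omega> t \<and> algebra \<Omega> \<Sigma> \<and> range t \<subseteq> \<Sigma> \<and> likelihood_appraisal \<Omega> \<Sigma> lk"

definition represents ::
  "('p form \<Rightarrow> 'w set) \<Rightarrow> ('w set \<Rightarrow> real) \<Rightarrow> ('p bet \<Rightarrow> 'p bet \<Rightarrow> bool) \<Rightarrow> bool" where
  "represents t lk R \<longleftrightarrow>
     (\<forall>b\<in>bets. \<forall>b'\<in>bets. R b b' \<longleftrightarrow>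
        (\<Sum>\<phi>\<in>supp b. b \<phi> * lk (t \<phi>)) \<ge> (\<Sum>\<phi>\<in>supp b'. b' \<phi> * lk (t \<phi>)))"

definition additive_subjective_rep ::
  "'p \<Rightarrow> 'p \<Rightarrow> 'w set \<Rightarrow> ('p bet \<Rightarrow> 'p bet \<Rightarrow> bool) \<Rightarrow> bool" where
  "additive_subjective_rep tT tF \<Omega> R \<longleftrightarrow>
     (\<exists>t \<Sigma> lk. subjective_model tT tF \<Omega> t \<Sigma> lk \<and> additive_on \<Sigma> lk \<and> represents t lk R)"

end

theory Submission
  imports Defs
begin

lemma bet_props:
  assumes "b \<in> bets"
  shows "0 \<le> b \<phi>" "b \<phi> \<le> 1" "finite (supp b)" "sum b (supp b) = 1"
  using assms by (auto simp: bets_def is_bet_def)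

lemma bet_zero: "b \<in> bets \<Longrightarrow> \<phi> \<notin> supp b \<Longrightarrow> b \<phi> = 0"
  using bet_props(1)[of b \<phi>] by (auto simp: supp_def)

lemma sum_superset:
  assumes "b \<in> bets" "finite S" "supp b \<subseteq> S"
  shows "(\<Sum>\<phi>\<in>S. b \<phi> * f \<phi>) = (\<Sum>\<phi>\<in>supp b. b \<phi> * f \<phi>)"
  using assms bet_zero[OF assms(1)] by (intro sum.mono_neutral_right) auto

lemma sum_superset1:
  assumes "b \<in> bets" "finite S" "supp b \<subseteq> S"
  shows "(\<Sum>\<phi>\<in>S. b \<phi>) = 1"
  using sum_superset[OF assms, of "\<lambda>_. 1"] bet_props(4)[OF assms(1)] by simp

lemma supp_prim: "supp (prim \<phi>) = {\<phi>}"
  by (auto simp: supp_def prim_def)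

lemma prim_bet: "prim \<phi> \<in> bets"
  by (auto simp: bets_def is_bet_def supp_prim) (auto simp: prim_def)

lemma supp_mix: "supp (mix a b b') \<subseteq> supp b \<union> supp b'"
  if "b \<in> bets" "b' \<in> bets"
proof
  fix x assume "x \<in> supp (mix a b b')"
  then have "mix a b b' x \<noteq> 0" by (auto simp: supp_def)
  then have "b x \<noteq> 0 \<or> b' x \<noteq> 0" by (auto simp: mix_def)
  then show "x \<in> supp b \<union> supp b'" using bet_props(1)[OF that(1), of x] bet_props(1)[OF that(2), of x]
    by (auto simp: supp_def)
qed

lemma mix_bet:
  assumes a: "0 \<le> a" "a \<le> 1" and b: "b \<in> bets" and b': "b' \<in> bets"
  shows "mix a b b' \<in> bets"
proof -
  let ?S = "supp b \<union> supp b'"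
  have fS: "finite ?S" using bet_props(3)[OF b] bet_props(3)[OF b'] by auto
  have nn: "0 \<le> mix a b b' \<phi>" for \<phi>
    unfolding mix_def using a bet_props(1)[OF b, of \<phi>] bet_props(1)[OF b', of \<phi>] by simp
  have le: "mix a b b' \<phi> \<le> 1" for \<phi>
  proof -
    have "a * b \<phi> + (1 - a) * b' \<phi> \<le> a * 1 + (1 - a) * 1"
      using a bet_props(2)[OF b, of \<phi>] bet_props(2)[OF b', of \<phi>]
      by (intro add_mono mult_left_mono) auto
    then show ?thesis by (simp add: mix_def)
  qed
  have sub: "supp (mix a b b') \<subseteq> ?S" using supp_mix[OF b b'] .
  have "sum (mix a b b') (supp (mix a b b')) = sum (mix a b b') ?S"
    using fS sub nn by (intro sum.mono_neutral_left) (auto simp: supp_def order.order_iff_strict)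
  also have "\<dots> = a * (\<Sum>\<phi>\<in>?S. b \<phi>) + (1 - a) * (\<Sum>\<phi>\<in>?S. b' \<phi>)"
    by (simp add: mix_def sum.distrib sum_distrib_left)
  also have "\<dots> = 1" using sum_superset1[OF b fS] sum_superset1[OF b' fS] by simp
  finally show ?thesis using nn le fS sub
    by (auto simp: bets_def is_bet_def intro: finite_subset)
qed

definition EU :: "('p form \<Rightarrow> real) \<Rightarrow> 'p bet \<Rightarrow> real" where
  "EU f b = (\<Sum>\<phi>\<in>supp b. b \<phi> * f \<phi>)"

lemma EU_prim: "EU f (prim \<phi>) = f \<phi>"
  unfolding EU_def supp_prim by (simp add: prim_def)

lemma EU_mix:
  assumes a: "0 \<le> a" "a \<le> 1" and b: "b \<in> bets" and b': "b' \<in> bets"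
  shows "EU f (mix a b b') = a * EU f b + (1 - a) * EU f b'"
proof -
  let ?S = "supp b \<union> supp b'"
  have fS: "finite ?S" using bet_props(3)[OF b] bet_props(3)[OF b'] by auto
  have "EU f (mix a b b') = (\<Sum>\<phi>\<in>?S. mix a b b' \<phi> * f \<phi>)"
    unfolding EU_def using sum_superset[OF mix_bet[OF a b b'] fS supp_mix[OF b b']] by simp
  also have "\<dots> = a * (\<Sum>\<phi>\<in>?S. b \<phi> * f \<phi>) + (1 - a) * (\<Sum>\<phi>\<in>?S. b' \<phi> * f \<phi>)"
    by (simp add: mix_def sum.distrib sum_distrib_left algebra_simps sum_subtractf)
  also have "\<dots> = a * EU f b + (1 - a) * EU f b'"
    unfolding EU_def using sum_superset[OF b fS] sum_superset[OF b' fS] by simp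
  finally show ?thesis .
qed

lemma EU_bounds:
  assumes b: "b \<in> bets" and f: "\<And>\<phi>. 0 \<le> f \<phi> \<and> f \<phi> \<le> 1"
  shows "0 \<le> EU f b" "EU f b \<le> 1"
proof -
  show "0 \<le> EU f b" unfolding EU_def using f bet_props(1)[OF b] by (intro sum_nonneg) auto
  have "EU f b \<le> (\<Sum>\<phi>\<in>supp b. b \<phi>)" unfolding EU_def
    using f bet_props(1)[OF b] by (intro sum_mono) (simp add: mult_left_le)
  then show "EU f b \<le> 1" using bet_props(4)[OF b] by simp
qed
lemma rep_implies:
  fixes R :: "'p bet \<Rightarrow> 'p bet \<Rightarrow> bool" and \<Omega> :: "'w set"
  assumes "additive_subjective_rep tT tF \<Omega> R"
  shows "non_triviality tT tF R \<and> objective_EU R"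
proof -
  obtain t \<Sigma> lk where sm: "subjective_model tT tF \<Omega> t \<Sigma> lk" and rep: "represents t lk R"
    using assms unfolding additive_subjective_rep_def by blast
  define f where "f = (\<lambda>\<phi>. lk (t \<phi>))"
  have f01: "0 \<le> f \<phi> \<and> f \<phi> \<le> 1" for \<phi>
    using sm unfolding subjective_model_def likelihood_appraisal_def f_def by auto
  have fT: "f (Prop tT) = 1" and fF: "f (Prop tF) = 0"
    using sm unfolding subjective_model_def likelihood_appraisal_def truth_valuation_def f_def by auto
  have R: "R b b' \<longleftrightarrow> EU f b' \<le> EU f b" if "b \<in> bets" "b' \<in> bets" for b b'
    using rep that unfolding represents_def EU_def f_def by auto
  have S: "strict R b b' \<longleftrightarrow> EU f b' < EU f b" if "b \<in> bets" "b' \<in> bets" for b b'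
    using R[OF that] R[OF that(2,1)] unfolding strict_def by auto
  have nt: "non_triviality tT tF R"
    unfolding non_triviality_def using R[OF prim_bet prim_bet] S[OF prim_bet prim_bet]
    by (simp add: EU_prim fT fF f01)
  have arch: "archimedean R"
    unfolding archimedean_def
  proof (intro ballI impI)
    fix b b' b'' :: "'p bet" assume b: "b \<in> bets" and b': "b' \<in> bets" and b'': "b'' \<in> bets"
      and h: "strict R b b' \<and> strict R b' b''"
    define x where "x = EU f b"
    define y where "y = EU f b'"
    define z where "z = EU f b''"
    have xy: "y < x" and yz: "z < y" using h S b b' b'' x_def y_def z_def by auto
    define \<alpha> where "\<alpha> = (y - z) / (2 * (x - z))"
    define \<beta> where "\<beta> = (1 + (y - z) / (x - z)) / 2"
    have q: "0 < (y - z) / (x - z)" "(y - z) / (x - z) < 1" using xy yz by (auto simp: field_simps)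
    have a01: "\<alpha> \<in> {0<..<1}" using xy yz unfolding \<alpha>_def by (auto simp: field_simps)
    have b01: "\<beta> \<in> {0<..<1}" using q unfolding \<beta>_def by auto
    have nz: "x - z \<noteq> 0" using xy yz by simp
    have "\<alpha> * (x - z) = (y - z) / 2" unfolding \<alpha>_def using nz by (simp add: field_simps)
    then have e1: "\<alpha> * x + (1 - \<alpha>) * z = z + (y - z) / 2" by (simp add: algebra_simps) argo
    have "\<beta> * (x - z) = ((x - z) + (y - z)) / 2" unfolding \<beta>_def using nz by (simp add: field_simps)
    then have e2: "\<beta> * x + (1 - \<beta>) * z = (x + y) / 2" by (simp add: algebra_simps)
    have m1: "mix \<alpha> b b'' \<in> bets" "mix \<beta> b b'' \<in> bets" using a01 b01 b b'' by (auto intro!: mix_bet)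
    have "EU f (mix \<alpha> b b'') = \<alpha> * x + (1 - \<alpha>) * z"
      using EU_mix[OF _ _ b b'', of \<alpha> f] a01 x_def z_def by auto
    then have "strict R b' (mix \<alpha> b b'')"
      using S[OF b' m1(1)] e1 yz y_def by (simp add: field_simps)
    moreover have "EU f (mix \<beta> b b'') = \<beta> * x + (1 - \<beta>) * z"
      using EU_mix[OF _ _ b b'', of \<beta> f] b01 x_def z_def by auto
    then have "strict R (mix \<beta> b b'') b'"
      using S[OF m1(2) b'] e2 xy y_def by (simp add: field_simps)
    ultimately show "\<exists>\<alpha>\<in>{0<..<1}. \<exists>\<beta>\<in>{0<..<1}. strict R (mix \<alpha> b b'') b' \<and> strict R b' (mix \<beta> b b'')"
      using a01 b01 by blast
  qed
  have ind: "independence R"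
    unfolding independence_def
  proof (intro ballI impI)
    fix b b' b'' :: "'p bet" and \<alpha> :: real assume b: "b \<in> bets" and b': "b' \<in> bets" and b'': "b'' \<in> bets"
      and a: "\<alpha> \<in> {0<..1}" and h: "strict R b b'"
    have "EU f b' < EU f b" using S b b' h by auto
    then have "\<alpha> * EU f b' + (1 - \<alpha>) * EU f b'' < \<alpha> * EU f b + (1 - \<alpha>) * EU f b''"
      using a by simp
    moreover have "mix \<alpha> b b'' \<in> bets" "mix \<alpha> b' b'' \<in> bets" using a b b' b'' by (auto intro!: mix_bet)
    moreover have "EU f (mix \<alpha> b b'') = \<alpha> * EU f b + (1 - \<alpha>) * EU f b''"
      "EU f (mix \<alpha> b' b'') = \<alpha> * EU f b' + (1 - \<alpha>) * EU f b''"
      using b b' b'' a by (auto intro!: EU_mix)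
    ultimately show "strict R (mix \<alpha> b b'') (mix \<alpha> b' b'')"
      using S by simp
  qed
  have "complete_on_bets R" unfolding complete_on_bets_def using R by auto
  moreover have "transitive_on_bets R" unfolding transitive_on_bets_def using R by force
  ultimately show ?thesis using nt arch ind unfolding objective_EU_def by auto
qed
lemma real_model:
  fixes u :: "'p form \<Rightarrow> real"
  assumes u01: "\<forall>\<phi>. 0 \<le> u \<phi> \<and> u \<phi> \<le> 1" and uT: "u (Prop tT) = 1" and uF: "u (Prop tF) = 0"
  shows "subjective_model tT tF {0..<1} (\<lambda>\<phi>. {0..<u \<phi>}) (sets (restrict_space lborel {0..<1::real})) (measure lborel)
     \<and> additive_on (sets (restrict_space lborel {0..<1::real})) (measure lborel)"
proof -
  let ?O = "{0..<1::real}"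
  let ?M = "restrict_space lborel ?O"
  have O: "?O \<inter> space lborel \<in> sets lborel" by simp
  have mem: "A \<in> sets ?M \<longleftrightarrow> A \<subseteq> ?O \<and> A \<in> sets lborel" for A
    using sets_restrict_space_iff[OF O] .
  have sp: "space ?M = ?O" by (simp add: space_restrict_space)
  have alg: "algebra ?O (sets ?M)"
    using sets.sigma_algebra_axioms[of ?M] sp sigma_algebra.axioms(1) by metis
  have fin: "emeasure lborel A \<noteq> \<infinity>" if "A \<in> sets ?M" for A
  proof -
    have "emeasure lborel A \<le> emeasure lborel ?O"
      using that mem by (intro emeasure_mono) auto
    then show ?thesis by (auto simp: top_unique)
  qed
  have tv: "truth_valuation tT tF ?O (\<lambda>\<phi>. {0..<u \<phi>})"
    unfolding truth_valuation_def using u01 uT uF by auto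
  have rng: "range (\<lambda>\<phi>. {0..<u \<phi>}) \<subseteq> sets ?M"
    using u01 mem by auto
  have la: "likelihood_appraisal ?O (sets ?M) (measure lborel)"
    unfolding likelihood_appraisal_def
  proof (intro conjI ballI)
    fix A assume A: "A \<in> sets ?M"
    show "0 \<le> measure lborel A" by simp
    have "measure lborel A \<le> measure lborel ?O"
      using A mem by (intro measure_mono_fmeasurable) (auto simp: fmeasurable_def)
    then show "measure lborel A \<le> 1" by simp
  qed auto
  have add: "additive_on (sets ?M) (measure lborel)"
    unfolding additive_on_def
  proof (intro ballI impI)
    fix A B assume A: "A \<in> sets ?M" and B: "B \<in> sets ?M" and d: "A \<inter> B = {}"
    show "measure lborel (A \<union> B) = measure lborel A + measure lborel B"
      using measure_Union[OF fin[OF A] fin[OF B] _ _ d] A B mem by auto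
  qed
  show ?thesis unfolding subjective_model_def using tv alg rng la add by auto
qed
lemma mix_1: "mix 1 x y = x" by (simp add: mix_def)
lemma mix_0: "mix 0 x y = y" by (simp add: mix_def)
lemma mix_same: "mix a x x = x" by (simp add: mix_def algebra_simps)
lemma mix_swap: "mix a x y = mix (1 - a) y x" by (simp add: mix_def algebra_simps)
lemma mix_nest: "mix a (mix b s q) r = mix b (mix a s r) (mix a q r)"
  by (rule ext) (simp add: mix_def algebra_simps)

locale vnm =
  fixes R :: "'p bet \<Rightarrow> 'p bet \<Rightarrow> bool" and tT tF :: 'p
  assumes nt: "non_triviality tT tF R" and oeu: "objective_EU R"
begin

lemma compl: "x \<in> bets \<Longrightarrow> y \<in> bets \<Longrightarrow> R x y \<or> R y x"
  using oeu unfolding objective_EU_def complete_on_bets_def by blast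

lemma refl: "x \<in> bets \<Longrightarrow> R x x" using compl by blast

lemma trans: "x \<in> bets \<Longrightarrow> y \<in> bets \<Longrightarrow> z \<in> bets \<Longrightarrow> R x y \<Longrightarrow> R y z \<Longrightarrow> R x z"
  using oeu unfolding objective_EU_def transitive_on_bets_def by blast

lemma indep: "x \<in> bets \<Longrightarrow> y \<in> bets \<Longrightarrow> z \<in> bets \<Longrightarrow> 0 < a \<Longrightarrow> a \<le> 1 \<Longrightarrow> strict R x y
   \<Longrightarrow> strict R (mix a x z) (mix a y z)"
  using oeu unfolding objective_EU_def independence_def by auto

lemma arch: "x \<in> bets \<Longrightarrow> y \<in> bets \<Longrightarrow> z \<in> bets \<Longrightarrow> strict R x y \<Longrightarrow> strict R y z \<Longrightarrow>
   \<exists>a\<in>{0<..<1}. \<exists>b\<in>{0<..<1}. strict R (mix a x z) y \<and> strict R y (mix b x z)"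
  using oeu unfolding objective_EU_def archimedean_def by blast

lemma sw_trans: "x \<in> bets \<Longrightarrow> y \<in> bets \<Longrightarrow> z \<in> bets \<Longrightarrow> strict R x y \<Longrightarrow> R y z \<Longrightarrow> strict R x z"
  unfolding strict_def using trans by blast

lemma ws_trans: "x \<in> bets \<Longrightarrow> y \<in> bets \<Longrightarrow> z \<in> bets \<Longrightarrow> R x y \<Longrightarrow> strict R y z \<Longrightarrow> strict R x z"
  unfolding strict_def using trans by blast

lemma ss_trans: "x \<in> bets \<Longrightarrow> y \<in> bets \<Longrightarrow> z \<in> bets \<Longrightarrow> strict R x y \<Longrightarrow> strict R y z \<Longrightarrow> strict R x z"
  using sw_trans unfolding strict_def by blast

lemma not_strict: "x \<in> bets \<Longrightarrow> y \<in> bets \<Longrightarrow> \<not> strict R x y \<Longrightarrow> R y x"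
  unfolding strict_def using compl by blast

abbreviation "TT \<equiv> prim (Prop tT)"
abbreviation "FF \<equiv> prim (Prop tF)"

lemma TF: "strict R TT FF" using nt unfolding non_triviality_def by blast

lemma bets01: "0 < a \<Longrightarrow> a \<le> 1 \<Longrightarrow> x \<in> bets \<Longrightarrow> y \<in> bets \<Longrightarrow> mix a x y \<in> bets"
  by (rule mix_bet) auto

lemma subst_half:
  assumes p: "p \<in> bets" and q: "q \<in> bets" and r: "r \<in> bets" and a: "0 < a" "a \<le> 1"
    and pq: "R p q" and qp: "R q p"
  shows "R (mix a p r) (mix a q r)"
proof (rule ccontr)
  assume "\<not> R (mix a p r) (mix a q r)"
  then have W: "strict R (mix a q r) (mix a p r)"
    using compl[OF bets01[OF a p r] bets01[OF a q r]] unfolding strict_def by blast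
  have mb: "\<And>c x y. 0 < c \<Longrightarrow> c \<le> 1 \<Longrightarrow> x \<in> bets \<Longrightarrow> y \<in> bets \<Longrightarrow> mix c x y \<in> bets" by (rule bets01)
  have s_ok: "TT \<in> bets" "FF \<in> bets" by (rule prim_bet)+
  have "\<exists>s\<in>bets. strict R s p \<or> strict R p s"
  proof (rule ccontr)
    assume "\<not> ?thesis"
    then have "R p TT" "R FF p" using not_strict[OF prim_bet p] not_strict[OF p prim_bet] s_ok by blast+
    then have "R FF TT" using trans[OF prim_bet p prim_bet] by blast
    then show False using TF unfolding strict_def by blast
  qed
  then obtain s where s: "s \<in> bets" and sp: "strict R s p \<or> strict R p s" by blast
  from sp show False
  proof
    assume sp: "strict R s p"
    have sq: "strict R s q" using sw_trans[OF s p q sp pq] .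
    have X: "strict R (mix a s r) (mix a q r)" using indep[OF s q r a sq] .
    obtain \<beta> where b: "\<beta> \<in> {0<..<1}" and
      h: "strict R (mix a q r) (mix \<beta> (mix a s r) (mix a p r))"
      using arch[OF mb[OF a s r] mb[OF a q r] mb[OF a p r] X W] by blast
    have "strict R (mix \<beta> s p) (mix \<beta> p p)" using indep[OF s p p _ _ sp] b by auto
    then have "strict R (mix \<beta> s p) p" by (simp add: mix_same)
    then have "strict R (mix \<beta> s p) q" using sw_trans[OF mb[OF _ _ s p] p q _ pq] b by auto
    then have "strict R (mix a (mix \<beta> s p) r) (mix a q r)"
      using indep[OF mb[OF _ _ s p] q r a] b by auto
    moreover have "mix \<beta> (mix a s r) (mix a p r) = mix a (mix \<beta> s p) r" by (rule mix_nest[symmetric])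
    ultimately show False using h unfolding strict_def by metis
  next
    assume ps: "strict R p s"
    have qs: "strict R q s" using ws_trans[OF q p s qp ps] .
    have Y: "strict R (mix a p r) (mix a s r)" using indep[OF p s r a ps] .
    obtain \<alpha> where al: "\<alpha> \<in> {0<..<1}" and
      h: "strict R (mix \<alpha> (mix a q r) (mix a s r)) (mix a p r)"
      using arch[OF mb[OF a q r] mb[OF a p r] mb[OF a s r] W Y] by blast
    have "strict R (mix (1 - \<alpha>) q q) (mix (1 - \<alpha>) s q)" using indep[OF q s q _ _ qs] al by auto
    then have "strict R q (mix \<alpha> q s)" using mix_swap[of "1 - \<alpha>" s q] by (simp add: mix_same)
    then have "strict R p (mix \<alpha> q s)" using ws_trans[OF p q mb[OF _ _ q s] pq] al by auto
    then have "strict R (mix a p r) (mix a (mix \<alpha> q s) r)"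
      using indep[OF p mb[OF _ _ q s] r a] al by auto
    moreover have "mix \<alpha> (mix a q r) (mix a s r) = mix a (mix \<alpha> q s) r" by (rule mix_nest[symmetric])
    ultimately show False using h unfolding strict_def by metis
  qed
qed


lemma indiff_subst:
  assumes p: "p \<in> bets" and q: "q \<in> bets" and r: "r \<in> bets" and a: "0 < a" "a \<le> 1"
    and pq: "R p q" and qp: "R q p"
  shows "R (mix a p r) (mix a q r) \<and> R (mix a q r) (mix a p r)"
  using subst_half[OF p q r a pq qp] subst_half[OF q p r a qp pq] by blast

definition M :: "real \<Rightarrow> 'p bet" where "M a = mix a TT FF"

lemma M_bet: "0 \<le> a \<Longrightarrow> a \<le> 1 \<Longrightarrow> M a \<in> bets"
  unfolding M_def by (rule mix_bet) (auto intro: prim_bet)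

lemma M_mix: "mix c (M x) (M y) = M (c * x + (1 - c) * y)"
  unfolding M_def by (rule ext) (simp add: mix_def algebra_simps)

lemma M1: "M 1 = TT" unfolding M_def by (simp add: mix_1)
lemma M0: "M 0 = FF" unfolding M_def by (simp add: mix_0)

lemma M_mono:
  assumes "0 \<le> \<beta>" "\<beta> < \<alpha>" "\<alpha> \<le> 1"
  shows "strict R (M \<alpha>) (M \<beta>)"
proof -
  have "strict R (mix (1 - \<beta>) TT TT) (mix (1 - \<beta>) FF TT)"
    using indep[OF prim_bet prim_bet prim_bet _ _ TF] assms by auto
  moreover have "mix (1 - \<beta>) FF TT = M \<beta>" unfolding M_def using mix_swap[of "1 - \<beta>" FF TT] by simp
  ultimately have TM: "strict R TT (M \<beta>)" by (simp add: mix_same)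
  define l where "l = (\<alpha> - \<beta>) / (1 - \<beta>)"
  have l: "0 < l" "l \<le> 1" using assms unfolding l_def by (auto simp: field_simps)
  have "strict R (mix l TT (M \<beta>)) (mix l (M \<beta>) (M \<beta>))"
    using indep[OF prim_bet M_bet M_bet l TM] assms by auto
  moreover have "mix l TT (M \<beta>) = M \<alpha>"
  proof -
    have "mix l TT (M \<beta>) = mix l (M 1) (M \<beta>)" by (simp add: M1)
    also have "\<dots> = M (l * 1 + (1 - l) * \<beta>)" by (rule M_mix)
    also have "l * 1 + (1 - l) * \<beta> = \<alpha>"
    proof -
      have "l * (1 - \<beta>) = \<alpha> - \<beta>" using assms unfolding l_def by simp
      then show ?thesis by (simp add: algebra_simps)
    qed
    finally show ?thesis .
  qed
  ultimately show ?thesis by (simp add: mix_same)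
qed

lemma M_le: "0 \<le> \<beta> \<Longrightarrow> \<beta> \<le> \<alpha> \<Longrightarrow> \<alpha> \<le> 1 \<Longrightarrow> R (M \<alpha>) (M \<beta>)"
  using M_mono[of \<beta> \<alpha>] refl[OF M_bet, of \<alpha>] unfolding strict_def
  by (cases "\<beta> = \<alpha>") auto

lemma calib:
  assumes b: "b \<in> bets" and bT: "R TT b" and bF: "R b FF"
  shows "\<exists>\<alpha>\<in>{0..1}. R b (M \<alpha>) \<and> R (M \<alpha>) b"
proof (cases "R b TT")
  case True then show ?thesis using bT M1 by (intro bexI[of _ 1]) auto
next
  case nT: False
  show ?thesis
  proof (cases "R FF b")
    case True then show ?thesis using bF M0 by (intro bexI[of _ 0]) auto
  next
    case nF: False
    have sT: "strict R TT b" and sF: "strict R b FF" using nT nF bT bF unfolding strict_def by auto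
    define S where "S = {\<gamma>\<in>{0..1}. strict R b (M \<gamma>)}"
    define \<alpha> where "\<alpha> = Sup S"
    have S0: "0 \<in> S" unfolding S_def using sF M0 by simp
    have Sbdd: "bdd_above S" unfolding S_def by (auto intro: bdd_aboveI[of _ 1])
    have Sne: "S \<noteq> {}" using S0 by blast
    have a0: "0 \<le> \<alpha>" unfolding \<alpha>_def using cSup_upper[OF S0 Sbdd] .
    have a1: "\<alpha> \<le> 1" unfolding \<alpha>_def using Sne by (intro cSup_least) (auto simp: S_def)
    have Mab: "M \<alpha> \<in> bets" using M_bet a0 a1 by auto
    have r1: "R (M \<alpha>) b"
    proof (rule ccontr)
      assume "\<not> R (M \<alpha>) b"
      then have h: "strict R b (M \<alpha>)" using compl[OF b Mab] unfolding strict_def by blast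
      have "\<alpha> \<noteq> 1" using h sT M1 unfolding strict_def by auto
      then have a1': "\<alpha> < 1" using a1 by simp
      obtain \<beta> where be: "\<beta> \<in> {0<..<1}" and hb: "strict R b (mix \<beta> TT (M \<alpha>))"
        using arch[OF prim_bet b Mab sT h] by blast
      have "mix \<beta> TT (M \<alpha>) = M (\<beta> * 1 + (1 - \<beta>) * \<alpha>)" using M_mix[of \<beta> 1 \<alpha>] by (simp add: M1)
      moreover define g where "g = \<beta> * 1 + (1 - \<beta>) * \<alpha>"
      have e1: "g - \<alpha> = \<beta> * (1 - \<alpha>)" and e2: "1 - g = (1 - \<beta>) * (1 - \<alpha>)"
        unfolding g_def by (simp_all add: algebra_simps)
      have p1: "0 < \<beta> * (1 - \<alpha>)" and p2: "0 \<le> (1 - \<beta>) * (1 - \<alpha>)" using be a1' by auto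
      have g: "0 \<le> g" "g \<le> 1" "\<alpha> < g"
        using p1 e1 a0 apply linarith using p2 e2 apply linarith using p1 e1 by linarith
      ultimately have "g \<in> S" using hb unfolding S_def g_def by auto
      then have "g \<le> \<alpha>" unfolding \<alpha>_def using cSup_upper Sbdd by blast
      then show False using g by simp
    qed
    have r2: "R b (M \<alpha>)"
    proof (rule ccontr)
      assume "\<not> R b (M \<alpha>)"
      then have h: "strict R (M \<alpha>) b" using compl[OF b Mab] unfolding strict_def by blast
      have "\<alpha> \<noteq> 0" using h sF M0 unfolding strict_def by auto
      then have a0': "0 < \<alpha>" using a0 by simp
      obtain a where aa: "a \<in> {0<..<1}" and ha: "strict R (mix a (M \<alpha>) FF) b"
        using arch[OF Mab b prim_bet h sF] by blast
      have "mix a (M \<alpha>) FF = M (a * \<alpha> + (1 - a) * 0)" using M_mix[of a \<alpha> 0] by (simp add: M0)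
      then have ha': "strict R (M (a * \<alpha>)) b" using ha by simp
      have "a * \<alpha> < \<alpha>" using aa a0' by simp
      then obtain \<gamma> where gS: "\<gamma> \<in> S" and gl: "a * \<alpha> < \<gamma>"
        unfolding \<alpha>_def using less_cSup_iff[OF Sne Sbdd] by blast
      have g01: "0 \<le> \<gamma>" "\<gamma> \<le> 1" and bg: "strict R b (M \<gamma>)" using gS unfolding S_def by auto
      have "0 \<le> a * \<alpha>" using aa a0 by simp
      then have "strict R (M \<gamma>) (M (a * \<alpha>))" using M_mono gl g01 by auto
      then have "strict R b (M (a * \<alpha>))" using ss_trans[OF b M_bet M_bet bg] g01 \<open>0 \<le> a * \<alpha>\<close> gl by auto
      then show False using ha' unfolding strict_def by blast
    qed
    show ?thesis using r1 r2 a0 a1 by auto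
  qed
qed

definition u :: "'p form \<Rightarrow> real" where
  "u \<phi> = (SOME \<alpha>. \<alpha> \<in> {0..1} \<and> R (prim \<phi>) (M \<alpha>) \<and> R (M \<alpha>) (prim \<phi>))"

lemma u_prop: "u \<phi> \<in> {0..1} \<and> R (prim \<phi>) (M (u \<phi>)) \<and> R (M (u \<phi>)) (prim \<phi>)"
proof -
  have "R TT (prim \<phi>)" "R (prim \<phi>) FF" using nt unfolding non_triviality_def by auto
  then have "\<exists>\<alpha>. \<alpha> \<in> {0..1} \<and> R (prim \<phi>) (M \<alpha>) \<and> R (M \<alpha>) (prim \<phi>)"
    using calib[OF prim_bet] by blast
  then show ?thesis unfolding u_def by (rule someI_ex)
qed

lemma u01: "0 \<le> u \<phi> \<and> u \<phi> \<le> 1" using u_prop by auto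

lemma uT: "u (Prop tT) = 1"
proof (rule ccontr)
  assume "u (Prop tT) \<noteq> 1"
  then have "u (Prop tT) < 1" using u01 by (simp add: order_less_le)
  then have "strict R (M 1) (M (u (Prop tT)))" using M_mono u01 by auto
  then show False using u_prop[of "Prop tT"] M1 unfolding strict_def by auto
qed

lemma uF: "u (Prop tF) = 0"
proof (rule ccontr)
  assume "u (Prop tF) \<noteq> 0"
  then have "0 < u (Prop tF)" using u01 by (simp add: order_less_le)
  then have "strict R (M (u (Prop tF))) (M 0)" using M_mono u01 by auto
  then show False using u_prop[of "Prop tF"] M0 unfolding strict_def by auto
qed

lemma EU_u01: "b \<in> bets \<Longrightarrow> 0 \<le> EU u b \<and> EU u b \<le> 1"
  using EU_bounds[of b u] u01 by auto

lemma ind_trans: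
  "x \<in> bets \<Longrightarrow> y \<in> bets \<Longrightarrow> z \<in> bets \<Longrightarrow> R x y \<and> R y x \<Longrightarrow> R y z \<and> R z y \<Longrightarrow> R x z \<and> R z x"
  using trans by blast

lemma main_ind:
  assumes "finite S"
  shows "\<forall>b. b \<in> bets \<and> supp b = S \<longrightarrow> R b (M (EU u b)) \<and> R (M (EU u b)) b"
  using assms
proof (induction S rule: finite_induct)
  case empty
  then show ?case using bet_props(4) by fastforce
next
  case (insert x F)
  show ?case
  proof (intro allI impI)
    fix b assume "b \<in> bets \<and> supp b = insert x F"
    then have b: "b \<in> bets" and sb: "supp b = insert x F" by auto
    have fF: "finite F" using insert by simp
    define p where "p = b x"
    have sum1: "p + sum b F = 1" using bet_props(4)[OF b] sb insert(2) fF unfolding p_def by simp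
    have p0: "0 < p" using sb unfolding p_def supp_def by auto
    have zero: "b \<psi> = 0" if "\<psi> \<notin> insert x F" for \<psi> using bet_zero[OF b] sb that by auto
    show "R b (M (EU u b)) \<and> R (M (EU u b)) b"
    proof (cases "F = {}")
      case True
      then have "p = 1" using sum1 by simp
      then have "b = prim x" using zero True unfolding p_def prim_def by (auto intro!: ext)
      then show ?thesis using u_prop[of x] by (simp add: EU_prim)
    next
      case Fne: False
      have Fpos: "0 < sum b F"
      proof -
        obtain y where y: "y \<in> F" using Fne by blast
        have "0 < b y" using y sb unfolding supp_def by auto
        moreover have "b y \<le> sum b F" using member_le_sum[OF y _ fF, of b] bet_props(1)[OF b] by auto
        ultimately show ?thesis by simp
      qed
      have p1: "p < 1" using sum1 Fpos by simp
      define c where "c = (\<lambda>\<psi>. if \<psi> = x then 0 else b \<psi> / (1 - p))"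
      have c_nn: "0 \<le> c \<psi>" for \<psi> using bet_props(1)[OF b] p1 unfolding c_def by auto
      have sc: "supp c = F"
      proof -
        have "supp c = supp b - {x}" using p1 unfolding supp_def c_def by (auto simp: zero_less_divide_iff)
        then show ?thesis using sb insert(2) by auto
      qed
      have csum: "sum c F = 1"
      proof -
        have "sum c F = sum (\<lambda>\<psi>. b \<psi> / (1 - p)) F" using insert(2) unfolding c_def by (intro sum.cong) auto
        also have "\<dots> = sum b F / (1 - p)" by (simp add: sum_divide_distrib)
        also have "\<dots> = 1" using sum1 p1 by simp
        finally show ?thesis .
      qed
      have c_le: "c \<psi> \<le> 1" for \<psi>
      proof (cases "\<psi> \<in> F")
        case True then show ?thesis using member_le_sum[OF True _ fF, of c] c_nn csum by auto
      next
        case False then have "\<psi> = x \<or> \<psi> \<notin> insert x F" by auto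
        then show ?thesis using zero unfolding c_def by auto
      qed
      have c: "c \<in> bets" unfolding bets_def is_bet_def using c_nn c_le sc fF csum by auto
      have IH: "R c (M (EU u c)) \<and> R (M (EU u c)) c" using insert(3) c sc by blast
      have bmix: "b = mix p (prim x) c"
      proof (rule ext)
        fix \<psi> show "b \<psi> = mix p (prim x) c \<psi>"
          using p1 unfolding mix_def prim_def c_def p_def by auto
      qed
      have EUb: "EU u b = p * u x + (1 - p) * EU u c"
        using EU_mix[OF _ _ prim_bet c, of p u x] p0 p1 bmix by (simp add: EU_prim)
      have ux: "u x \<in> {0..1}" and Uc: "0 \<le> EU u c \<and> EU u c \<le> 1" using u01 EU_u01[OF c] by auto
      have Mux: "M (u x) \<in> bets" and MUc: "M (EU u c) \<in> bets" using ux Uc M_bet by auto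
      have s1: "R (mix p (prim x) c) (mix p (M (u x)) c) \<and> R (mix p (M (u x)) c) (mix p (prim x) c)"
        using indiff_subst[OF prim_bet Mux c p0 _] p1 u_prop[of x] by auto
      have s2: "R (mix (1 - p) c (M (u x))) (mix (1 - p) (M (EU u c)) (M (u x)))
             \<and> R (mix (1 - p) (M (EU u c)) (M (u x))) (mix (1 - p) c (M (u x)))"
        using indiff_subst[OF c MUc Mux _ _] p0 p1 IH by auto
      have e1: "mix p (M (u x)) c = mix (1 - p) c (M (u x))" using mix_swap[of p "M (u x)" c] .
      have e2: "mix (1 - p) (M (EU u c)) (M (u x)) = M (EU u b)"
        unfolding M_mix EUb by (simp add: algebra_simps)
      have bb1: "mix p (M (u x)) c \<in> bets" using bets01[OF p0 _ Mux c] p1 by simp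
      show ?thesis using ind_trans[OF b bb1 M_bet] s1 s2 e1 e2 bmix EU_u01[OF b] by auto
    qed
  qed
qed

lemma main: "b \<in> bets \<Longrightarrow> R b (M (EU u b)) \<and> R (M (EU u b)) b"
  using main_ind[OF bet_props(3)] by blast

lemma represent:
  assumes b: "b \<in> bets" and b': "b' \<in> bets"
  shows "R b b' \<longleftrightarrow> EU u b' \<le> EU u b"
proof -
  have m: "M (EU u b) \<in> bets" "M (EU u b') \<in> bets" using M_bet EU_u01 b b' by auto
  show ?thesis
  proof
    assume h: "R b b'"
    show "EU u b' \<le> EU u b"
    proof (rule ccontr)
      assume "\<not> ?thesis"
      then have "strict R (M (EU u b')) (M (EU u b))" using M_mono EU_u01 b b' by auto
      then have "strict R b' b" using ws_trans[OF b' m(2) b] sw_trans[OF m(2) m(1) b] main[OF b] main[OF b'] by blast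
      then show False using h unfolding strict_def by blast
    qed
  next
    assume "EU u b' \<le> EU u b"
    then have "R (M (EU u b)) (M (EU u b'))" using M_le EU_u01 b b' by auto
    then show "R b b'" using trans[OF b m(1) b'] trans[OF m(1) m(2) b'] main[OF b] main[OF b'] by blast
  qed
qed

end

lemma implies_rep:
  fixes R :: "'p bet \<Rightarrow> 'p bet \<Rightarrow> bool"
  assumes "non_triviality tT tF R" "objective_EU R"
  shows "additive_subjective_rep tT tF {0..<1::real} R"
proof -
  interpret V: vnm R tT tF using assms by unfold_locales
  have m: "subjective_model tT tF {0..<1} (\<lambda>\<phi>. {0..<V.u \<phi>}) (sets (restrict_space lborel {0..<1::real})) (measure lborel)
     \<and> additive_on (sets (restrict_space lborel {0..<1::real})) (measure lborel)"
    using real_model[of V.u tT tF] V.u01 V.uT V.uF by blast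
  have ml: "measure lborel {0..<V.u \<phi>} = V.u \<phi>" for \<phi> using V.u01[of \<phi>] by simp
  have "represents (\<lambda>\<phi>. {0..<V.u \<phi>}) (measure lborel) R"
    unfolding represents_def using V.represent by (simp add: ml EU_def)
  then show ?thesis unfolding additive_subjective_rep_def using m by blast
qed

theorem proposition1:
  fixes tT tF :: 'p and R :: "'p bet \<Rightarrow> 'p bet \<Rightarrow> bool"
  shows "((non_triviality tT tF R \<and> objective_EU R)
            \<longleftrightarrow> (\<exists>\<Omega> :: real set. additive_subjective_rep tT tF \<Omega> R))
         \<and> ((\<exists>\<Omega> :: 'w set. additive_subjective_rep tT tF \<Omega> R)
            \<longrightarrow> non_triviality tT tF R \<and> objective_EU R)"
proof -
  have A: "non_triviality tT tF R \<and> objective_EU R" if "additive_subjective_rep tT tF (\<Omega> :: real set) R" for \<Omega>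
    using rep_implies[OF that] .
  have B: "non_triviality tT tF R \<and> objective_EU R" if "additive_subjective_rep tT tF (\<Omega> :: 'w set) R" for \<Omega>
    using rep_implies[OF that] .
  show ?thesis using implies_rep[of tT tF R] A B by blast
qed

end
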